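(* For $0<\nu\le1$, the functions $p_*(\nu)$, $\nu h_*(\nu)$ and $\nu h(\mathrm e^{-1}\nu,\nu)$ are strictly increasing in $\nu$, while $h_*(\nu)$ and $h(\mathrm e^{-1}\nu,\nu)$ are strictly decreasing in $\nu$. Moreover, $$\nu h_*(\nu)\le\nu h(\mathrm e^{-1}\nu,\nu)\le(1-\nu+\mathrm e^{-1}\nu^2)^{-1}\le1+(\mathrm e-1)\nu\le\mathrm e.$$
   Context: For $0<\nu\le1$ and $0\le p<1$, let $\beta_p=1-\nu+p\nu$ and, for $p>0$, $h(p,\nu)=[\min\{\beta_p\ln\beta_p^{-1},\,p\ln p^{-1}\}]^{-1}$. Let $p_*(\nu)=\min\{p>0:\beta_p\ge\mathrm e^{-1}\text{ and }p\ln p=\beta_p\ln\beta_p\}$, which is the minimizer of $h(\cdot,\nu)$ over $0<p<1$, and $h_*(\nu)=h(p_*(\nu),\nu)=\min_{0<p<1}h(p,\nu)$. Here $\mathrm e$ is the base of the natural logarithm. *)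

theory Defs
  imports Complex_Main
begin

definition beta :: "real \<Rightarrow> real \<Rightarrow> real" where
  "beta p \<nu> = 1 - \<nu> + p * \<nu>"

definition h :: "real \<Rightarrow> real \<Rightarrow> real" where
  "h p \<nu> = inverse (min (beta p \<nu> * ln (inverse (beta p \<nu>))) (p * ln (inverse p)))"

definition p_star :: "real \<Rightarrow> real" where
  "p_star \<nu> = (LEAST p. p > 0 \<and> beta p \<nu> \<ge> exp (-1) \<and> p * ln p = beta p \<nu> * ln (beta p \<nu>))"

definition h_star :: "real \<Rightarrow> real" where
  "h_star \<nu> = h (p_star \<nu>) \<nu>"

end

theory Submission
  imports Defs "HOL-Analysis.Analysis"
begin


lemma e_bounds: "2.718 < exp (1::real)" "exp (1::real) < 2.719"
  using e_approx_32 by (auto simp: abs_if split: if_split_asm)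

lemma f_dec:
  fixes x y :: real
  assumes "0 < x" "x < y" "y \<le> exp (-1)"
  shows "y * ln y < x * ln x"
proof -
  have "(\<lambda>t. t * ln t) x > (\<lambda>t. t * ln t) y"
  proof (rule DERIV_neg_imp_decreasing_open[OF assms(2)])
    fix t assume t: "x < t" "t < y"
    have "ln t < ln (exp (-1))" using t assms by (subst ln_less_cancel_iff) auto
    hence "ln t + 1 < 0" by simp
    moreover have "DERIV (\<lambda>t. t * ln t) t :> ln t + 1"
      using t assms by (auto intro!: derivative_eq_intros)
    ultimately show "\<exists>d. DERIV (\<lambda>t. t * ln t) t :> d \<and> d < 0" by blast
  next
    show "continuous_on {x..y} (\<lambda>t. t * ln t)"
      using assms by (auto intro!: continuous_intros)
  qed
  thus ?thesis by simp
qed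

lemma f_inc:
  fixes x y :: real
  assumes "exp (-1) \<le> x" "x < y"
  shows "x * ln x < y * ln y"
proof -
  have xp: "0 < x" using assms(1) exp_gt_zero[of "-1"] by linarith
  have "(\<lambda>t. t * ln t) x < (\<lambda>t. t * ln t) y"
  proof (rule DERIV_pos_imp_increasing_open[OF assms(2)])
    fix t assume t: "x < t" "t < y"
    have "ln t > ln (exp (-1))" using t assms xp by (subst ln_less_cancel_iff) auto
    hence "ln t + 1 > 0" by simp
    moreover have "DERIV (\<lambda>t. t * ln t) t :> ln t + 1"
      using t xp by (auto intro!: derivative_eq_intros)
    ultimately show "\<exists>d. DERIV (\<lambda>t. t * ln t) t :> d \<and> d > 0" by blast
  next
    show "continuous_on {x..y} (\<lambda>t. t * ln t)"
      using xp by (auto intro!: continuous_intros)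
  qed
  thus ?thesis by simp
qed

lemma f_min:
  fixes x :: real
  assumes "0 < x"
  shows "- exp (-1) \<le> x * ln x"
proof -
  have v: "exp (-1) * ln (exp (-1)) = - exp (-1::real)" by simp
  show ?thesis
  proof (cases "x < exp (-1)")
    case True thus ?thesis using f_dec[OF assms True] v by simp
  next
    case False
    show ?thesis
    proof (cases "x = exp (-1)")
      case True thus ?thesis by simp
    next
      case False2: False
      hence "exp (-1) < x" using False by simp
      thus ?thesis using f_inc[of "exp (-1)" x] v by simp
    qed
  qed
qed

definition K :: "real \<Rightarrow> real" where "K t = - ((1 - t) * ln (1 - t)) / t"

lemma K_dec:
  assumes "0 < x" "x < y" "y < 1"
  shows "K y < K x"
proof -
  have "K x > K y"
  proof (rule DERIV_neg_imp_decreasing[OF assms(2)])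
    fix t assume t: "x \<le> t" "t \<le> y"
    hence t0: "0 < t" "t < 1" using assms by auto
    have "DERIV K t :> (ln (1 - t) + t) / t^2"
      unfolding K_def using t0
      by (auto intro!: derivative_eq_intros simp: field_simps power2_eq_square)
    moreover have "ln (1 - t) + t < 0"
      using ln_add_one_self_less_self[of "-t"] t0 ln_le_minus_one[of "1-t"] ln_eq_minus_one[of "1-t"]
      by (smt (verit))
    hence "(ln (1 - t) + t) / t^2 < 0" using t0 by (simp add: divide_neg_pos)
    ultimately show "\<exists>d. DERIV K t :> d \<and> d < 0" by blast
  qed
  thus ?thesis by simp
qed

lemma K_pos: "0 < t \<Longrightarrow> t < 1 \<Longrightarrow> 0 < K t"
proof -
  assume t: "0 < t" "t < 1"
  have "ln (1 - t) < 0" using t by simp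
  hence "(1 - t) * ln (1 - t) < 0" using t by (simp add: mult_pos_neg)
  thus ?thesis unfolding K_def using t by (simp add: divide_neg_pos)
qed

lemma E_pos: "0 < exp (-1::real)" by simp
lemma E_lt1: "exp (-1::real) < 1" by simp

lemma pstar_uniq:
  fixes p q \<nu> :: real
  assumes nu: "0 < \<nu>" and pq: "0 < p" "p < q" "q \<le> exp (-1)"
    and bp: "exp (-1) \<le> beta p \<nu>" and eqp: "p * ln p = beta p \<nu> * ln (beta p \<nu>)"
    and bq: "exp (-1) \<le> beta q \<nu>" and eqq: "q * ln q = beta q \<nu> * ln (beta q \<nu>)"
  shows False
proof -
  have "beta p \<nu> < beta q \<nu>" using nu pq unfolding beta_def by simp
  hence "beta p \<nu> * ln (beta p \<nu>) < beta q \<nu> * ln (beta q \<nu>)" using f_inc bp by blast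
  moreover have "q * ln q < p * ln p" using f_dec pq by blast
  ultimately show False using eqp eqq by linarith
qed

lemma pstar_exists:
  fixes \<nu> :: real
  assumes nu: "0 < \<nu>" "\<nu> \<le> 1"
  shows "\<exists>p. 0 < p \<and> p \<le> exp (-1) \<and> exp (-1) \<le> beta p \<nu> \<and> p * ln p = beta p \<nu> * ln (beta p \<nu>)"
proof -
  define m where "m p = max (beta p \<nu>) (exp (-1))" for p
  define G where "G p = p * ln p - m p * ln (m p)" for p
  define m0 where "m0 = max (1 - \<nu>) (exp (-1))"
  have m0: "exp (-1) \<le> m0" "m0 < 1" using nu unfolding m0_def by auto
  have m0p: "0 < m0" using m0 E_pos by linarith
  have m0n: "m0 * ln m0 < 0" using m0 m0p by (intro mult_pos_neg) auto
  have l1: "((\<lambda>p::real. p * ln p) \<longlongrightarrow> 0) (at_right 0)" by real_asymp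
  have l2: "((\<lambda>p. m p * ln (m p)) \<longlongrightarrow> m0 * ln m0) (at_right 0)"
  proof -
    have "((\<lambda>p. m p) \<longlongrightarrow> m 0) (at_right 0)"
      unfolding m_def beta_def by (intro tendsto_intros)
    moreover have "m 0 = m0" unfolding m_def m0_def beta_def by simp
    ultimately have lm: "((\<lambda>p. m p) \<longlongrightarrow> m0) (at_right 0)" by simp
    have "m0 > 0" using m0 E_pos by linarith
    thus ?thesis by (intro tendsto_intros lm) auto
  qed
  have "(G \<longlongrightarrow> 0 - m0 * ln m0) (at_right 0)"
    unfolding G_def by (intro tendsto_intros l1 l2)
  hence "eventually (\<lambda>p. G p > 0) (at_right 0)"
    using m0n by (intro order_tendstoD(1)) auto
  then obtain b where b: "b > 0" "\<And>y. y > 0 \<Longrightarrow> y < b \<Longrightarrow> G y > 0"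
    unfolding eventually_at_right[OF zero_less_one] 
    by (auto simp: eventually_at_right_field)
  define a where "a = min b (exp (-1)) / 2"
  have a: "0 < a" "a < exp (-1)" "a < b" using b E_pos unfolding a_def by (auto simp: min_def)
  have Ga: "G a > 0" using b a by auto
  have mpos: "m p > 0" for p unfolding m_def using E_pos by linarith
  have GE: "G (exp (-1)) \<le> 0"
    using f_min[OF mpos[of "exp (-1)"]] unfolding G_def by simp
  have cont: "continuous_on {a..exp (-1)} G"
    unfolding G_def m_def beta_def using a mpos unfolding m_def beta_def
    by (auto intro!: continuous_intros)
  obtain p0 where p0: "a \<le> p0" "p0 \<le> exp (-1)" "G p0 = 0"
    using IVT2'[of G "exp (-1)" 0 a, OF GE _ _ cont] Ga a by auto
  have bp0: "exp (-1) \<le> beta p0 \<nu>"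
  proof (rule ccontr)
    assume nb: "\<not> ?thesis"
    hence "m p0 = exp (-1)" unfolding m_def by simp
    hence eq: "p0 * ln p0 = - exp (-1)" using p0 unfolding G_def by simp
    show False
    proof (cases "p0 < exp (-1)")
      case True
      from f_dec[of p0 "exp (-1)"] True a p0 eq show False by simp
    next
      case False
      hence "p0 = exp (-1)" using p0 by simp
      moreover have "beta (exp (-1)) \<nu> \<ge> exp (-1)"
      proof -
        have "(1 - \<nu>) * (1 - exp (-1)) \<ge> 0" using nu E_lt1 by simp
        thus ?thesis unfolding beta_def by (simp add: algebra_simps)
      qed
      ultimately show False using nb by simp
    qed
  qed
  hence "m p0 = beta p0 \<nu>" unfolding m_def by simp
  thus ?thesis using p0 a bp0 unfolding G_def by (intro exI[of _ p0]) auto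
qed

lemma pstar_props:
  fixes \<nu> :: real
  assumes nu: "0 < \<nu>" "\<nu> \<le> 1"
  shows "0 < p_star \<nu>" "p_star \<nu> \<le> exp (-1)" "exp (-1) \<le> beta (p_star \<nu>) \<nu>"
    "p_star \<nu> * ln (p_star \<nu>) = beta (p_star \<nu>) \<nu> * ln (beta (p_star \<nu>) \<nu>)"
proof -
  obtain p0 where p0: "0 < p0" "p0 \<le> exp (-1)" "exp (-1) \<le> beta p0 \<nu>"
    "p0 * ln p0 = beta p0 \<nu> * ln (beta p0 \<nu>)"
    using pstar_exists[OF nu] by blast
  have "p_star \<nu> = p0" unfolding p_star_def
  proof (rule Least_equality)
    show "0 < p0 \<and> exp (-1) \<le> beta p0 \<nu> \<and> p0 * ln p0 = beta p0 \<nu> * ln (beta p0 \<nu>)"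
      using p0 by simp
  next
    fix y assume y: "0 < y \<and> exp (-1) \<le> beta y \<nu> \<and> y * ln y = beta y \<nu> * ln (beta y \<nu>)"
    show "p0 \<le> y"
    proof (rule ccontr)
      assume "\<not> p0 \<le> y"
      hence "y < p0" by simp
      thus False using pstar_uniq[of \<nu> y p0] y p0 nu by auto
    qed
  qed
  thus "0 < p_star \<nu>" "p_star \<nu> \<le> exp (-1)" "exp (-1) \<le> beta (p_star \<nu>) \<nu>"
    "p_star \<nu> * ln (p_star \<nu>) = beta (p_star \<nu>) \<nu> * ln (beta (p_star \<nu>) \<nu>)"
    using p0 by auto
qed

lemma h_eq: "h p \<nu> = inverse (min (- (beta p \<nu> * ln (beta p \<nu>))) (- (p * ln p)))"
  unfolding h_def by (simp add: ln_inverse)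

lemma hstar_eq:
  assumes "0 < \<nu>" "\<nu> \<le> 1"
  shows "h_star \<nu> = inverse (- (p_star \<nu> * ln (p_star \<nu>)))"
  unfolding h_star_def h_eq using pstar_props(4)[OF assms] by simp

lemma negf_pos: "0 < x \<Longrightarrow> x < (1::real) \<Longrightarrow> 0 < - (x * ln x)"
  by (simp add: mult_pos_neg)

lemma h_min:
  fixes \<nu> p :: real
  assumes nu: "0 < \<nu>" "\<nu> \<le> 1" and p: "0 < p" "p < 1"
  shows "h_star \<nu> \<le> h p \<nu>"
proof -
  define P where "P = p_star \<nu>"
  note PP = pstar_props[OF nu, folded P_def]
  have "p * \<nu> < \<nu>" using p nu by simp
  moreover have "0 < p * \<nu>" using p nu by simp
  ultimately have b: "0 < beta p \<nu>" "beta p \<nu> < 1" using nu unfolding beta_def by linarith+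
  have mpos: "0 < min (- (beta p \<nu> * ln (beta p \<nu>))) (- (p * ln p))"
    using negf_pos[OF b] negf_pos[OF p] by simp
  have "min (- (beta p \<nu> * ln (beta p \<nu>))) (- (p * ln p)) \<le> - (P * ln P)"
  proof (cases "p \<le> P")
    case True
    have "P * ln P \<le> p * ln p"
      using f_dec[of p P] True PP p by (cases "p = P") auto
    thus ?thesis by simp
  next
    case False
    hence "beta P \<nu> < beta p \<nu>" using nu unfolding beta_def by simp
    hence "beta P \<nu> * ln (beta P \<nu>) < beta p \<nu> * ln (beta p \<nu>)"
      using f_inc PP(3) by blast
    thus ?thesis using PP(4) by simp
  qed
  hence "inverse (- (P * ln P)) \<le> inverse (min (- (beta p \<nu> * ln (beta p \<nu>))) (- (p * ln p)))"
    using mpos by (rule le_imp_inverse_le)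
  thus ?thesis using hstar_eq[OF nu] unfolding h_eq P_def by simp
qed

lemma inv_min_max:
  fixes A B \<nu> :: real
  assumes "0 < A" "0 < B" "0 \<le> \<nu>"
  shows "\<nu> * inverse (min A B) = max (\<nu> / A) (\<nu> / B)"
proof (cases "A \<le> B")
  case True
  hence "\<nu> / B \<le> \<nu> / A" using assms by (intro divide_left_mono) auto
  thus ?thesis using True by (simp add: min_def max_def divide_inverse)
next
  case False
  hence "\<nu> / A \<le> \<nu> / B" using assms by (intro divide_left_mono) auto
  thus ?thesis using False by (simp add: min_def max_def divide_inverse)
qed

lemma ratio_mono:
  fixes A1 B1 A2 B2 \<nu>1 \<nu>2 :: real
  assumes "0 < A1" "0 < B1" "0 < A2" "0 < B2" "0 \<le> \<nu>1" "0 \<le> \<nu>2"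
    "\<nu>1 / A1 < \<nu>2 / A2" "\<nu>1 / B1 < \<nu>2 / B2"
  shows "\<nu>1 * inverse (min A1 B1) < \<nu>2 * inverse (min A2 B2)"
  using assms by (auto simp: inv_min_max max_def)


lemma Ee: "exp (-1) * exp 1 = (1::real)" using exp_minus_inverse[of "1::real"] by (simp only: mult.commute)
lemma E_half: "exp (-1) < (1/2::real)"
proof -
  have "exp (-1) * exp 1 < (1/2) * exp (1::real)" using Ee e_bounds by simp
  thus ?thesis by simp
qed

lemma K_mult: "0 < t \<Longrightarrow> t * K t = - ((1 - t) * ln (1 - t))"
  unfolding K_def by simp

lemma nuh_mono_p:
  fixes p \<nu>1 \<nu>2 :: real
  assumes p: "0 < p" "p < 1" and nu: "0 < \<nu>1" "\<nu>1 < \<nu>2" "\<nu>2 \<le> 1"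
  shows "\<nu>1 * h p \<nu>1 < \<nu>2 * h p \<nu>2"
proof -
  define c where "c = 1 - p"
  have c: "0 < c" "c < 1" using p unfolding c_def by auto
  have bc: "beta p \<nu> = 1 - c * \<nu>" for \<nu> unfolding beta_def c_def by (simp add: algebra_simps)
  have "c * \<nu>2 \<le> c" using c nu mult_left_le[of \<nu>2 c] by simp
  hence t1c: "c * \<nu>2 < 1" using c by linarith
  have t1: "0 < c * \<nu>1" "c * \<nu>1 < c * \<nu>2" "c * \<nu>2 < 1" using c nu t1c by auto
  have A: "- (beta p \<nu> * ln (beta p \<nu>)) = c * \<nu> * K (c * \<nu>)" if "0 < \<nu>" for \<nu>
    using K_mult[of "c * \<nu>"] that c bc by simp
  have Kp: "0 < K (c * \<nu>1)" "0 < K (c * \<nu>2)" using K_pos t1 by auto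
  have Kd: "K (c * \<nu>2) < K (c * \<nu>1)" using K_dec t1 by blast
  have r1: "\<nu>1 / (c * \<nu>1 * K (c * \<nu>1)) < \<nu>2 / (c * \<nu>2 * K (c * \<nu>2))"
  proof -
    have "\<nu>1 / (c * \<nu>1 * K (c * \<nu>1)) = inverse (c * K (c * \<nu>1))" using nu by (simp add: field_simps)
    moreover have "\<nu>2 / (c * \<nu>2 * K (c * \<nu>2)) = inverse (c * K (c * \<nu>2))" using nu by (simp add: field_simps)
    moreover have "inverse (c * K (c * \<nu>1)) < inverse (c * K (c * \<nu>2))"
      using Kp Kd c by (intro less_imp_inverse_less) auto
    ultimately show ?thesis by simp
  qed
  have B: "0 < - (p * ln p)" using negf_pos p by blast
  have r2: "\<nu>1 / (- (p * ln p)) < \<nu>2 / (- (p * ln p))" by (rule divide_strict_right_mono[OF nu(2) B])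
  show ?thesis unfolding h_eq
    apply (rule ratio_mono)
    using A[of \<nu>1] A[of \<nu>2] nu c Kp B r1 r2 by auto
qed

lemma betaq:
  fixes \<nu> :: real
  assumes nu: "0 < \<nu>" "\<nu> \<le> 1"
  shows "beta (exp (-1) * \<nu>) \<nu> = 1 - \<nu> * (1 - exp (-1) * \<nu>)"
    "exp (-1) \<le> beta (exp (-1) * \<nu>) \<nu>" "beta (exp (-1) * \<nu>) \<nu> < 1"
    "0 < \<nu> * (1 - exp (-1) * \<nu>)"
proof -
  show eq: "beta (exp (-1) * \<nu>) \<nu> = 1 - \<nu> * (1 - exp (-1) * \<nu>)"
    unfolding beta_def by (simp add: algebra_simps)
  have "exp (-1) * \<nu> \<le> exp (-1)" using nu mult_left_le[of \<nu> "exp (-1)"] by simp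
  hence "exp (-1) * \<nu> < 1/2" using E_half by linarith
  thus pos: "0 < \<nu> * (1 - exp (-1) * \<nu>)" using nu by simp
  thus "beta (exp (-1) * \<nu>) \<nu> < 1" using eq by simp
  have id: "beta (exp (-1) * \<nu>) \<nu> - exp (-1) = exp (-1) * ((1 - \<nu>) * (exp 1 - 1 - \<nu>))"
    unfolding beta_def using Ee by (simp add: algebra_simps)
  have "0 \<le> exp (-1) * ((1 - \<nu>) * (exp 1 - 1 - \<nu>))"
    using nu e_bounds by (intro mult_nonneg_nonneg) auto
  thus "exp (-1) \<le> beta (exp (-1) * \<nu>) \<nu>" using id by simp
qed

lemma Bq: "0 < (\<nu>::real) \<Longrightarrow> - (exp (-1) * \<nu> * ln (exp (-1) * \<nu>)) = exp (-1) * \<nu> * (1 - ln \<nu>)"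
proof -
  assume "0 < \<nu>"
  hence "ln (exp (-1) * \<nu>) = -1 + ln \<nu>" by (simp add: ln_mult)
  show ?thesis apply (subst \<open>ln (exp (-1) * \<nu>) = -1 + ln \<nu>\<close>) by (simp add: algebra_simps)
qed

lemma nuh_mono_q:
  fixes \<nu>1 \<nu>2 :: real
  assumes nu: "0 < \<nu>1" "\<nu>1 < \<nu>2" "\<nu>2 \<le> 1"
  shows "\<nu>1 * h (exp (-1) * \<nu>1) \<nu>1 < \<nu>2 * h (exp (-1) * \<nu>2) \<nu>2"
proof -
  define E where "E = exp (-1::real)"
  define t1 where "t1 = \<nu>1 * (1 - E * \<nu>1)"
  define t2 where "t2 = \<nu>2 * (1 - E * \<nu>2)"
  have n1: "0 < \<nu>1" "\<nu>1 \<le> 1" and n2: "0 < \<nu>2" "\<nu>2 \<le> 1" using nu by auto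
  note q1 = betaq[OF n1, folded E_def t1_def] and q2 = betaq[OF n2, folded E_def t2_def]
  have Eh: "E < 1/2" "0 < E" using E_half E_pos unfolding E_def by auto
  have tt: "t1 < t2"
  proof -
    have "t2 - t1 = (\<nu>2 - \<nu>1) * (1 - E * (\<nu>1 + \<nu>2))" unfolding t1_def t2_def by (simp add: algebra_simps)
    moreover have "E * (\<nu>1 + \<nu>2) \<le> E * 2" using Eh nu by (intro mult_left_mono) auto
    hence "E * (\<nu>1 + \<nu>2) < 1" using Eh by linarith
    moreover have "0 < (\<nu>2 - \<nu>1) * (1 - E * (\<nu>1 + \<nu>2))"
      by (rule mult_pos_pos) (use nu \<open>E * (\<nu>1 + \<nu>2) < 1\<close> in auto)
    ultimately show ?thesis by linarith
  qed
  have t1b: "0 < t1" "t1 < 1" and t2b: "0 < t2" "t2 < 1" using q1 q2 E_pos[folded E_def] unfolding t1_def t2_def by linarith+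
  have Kd: "K t2 < K t1" using K_dec tt t1b t2b by blast
  have Kp: "0 < K t1" "0 < K t2" using K_pos t1b t2b by auto
  have A: "- (beta (E * \<nu>) \<nu> * ln (beta (E * \<nu>) \<nu>)) = \<nu> * (1 - E * \<nu>) * K (\<nu> * (1 - E * \<nu>))"
    if "0 < \<nu>" "\<nu> \<le> 1" for \<nu>
    using K_mult[of "\<nu> * (1 - E * \<nu>)"] betaq[OF that, folded E_def] by simp
  have "E * \<nu>2 \<le> E" using nu Eh mult_left_le[of \<nu>2 E] by simp
  hence f10: "0 < 1 - E * \<nu>2" using Eh by linarith
  have f1: "0 < 1 - E * \<nu>2" "1 - E * \<nu>2 < 1 - E * \<nu>1" using f10 Eh nu by auto
  have r1: "\<nu>1 / (\<nu>1 * (1 - E * \<nu>1) * K t1) < \<nu>2 / (\<nu>2 * (1 - E * \<nu>2) * K t2)"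
  proof -
    have eq1: "\<nu>1 / (\<nu>1 * (1 - E * \<nu>1) * K t1) = inverse ((1 - E * \<nu>1) * K t1)" using nu f1 Kp by (simp add: field_simps)
    have eq2: "\<nu>2 / (\<nu>2 * (1 - E * \<nu>2) * K t2) = inverse ((1 - E * \<nu>2) * K t2)" using nu f1 Kp by (simp add: field_simps)
    moreover have "(1 - E * \<nu>2) * K t2 < (1 - E * \<nu>1) * K t1"
      using f1 Kd Kp by (intro mult_strict_mono) auto
    moreover have "0 < (1 - E * \<nu>2) * K t2" using f1 Kp by simp
    ultimately have "inverse ((1 - E * \<nu>1) * K t1) < inverse ((1 - E * \<nu>2) * K t2)"
      by (intro less_imp_inverse_less)
    with eq1 eq2 show ?thesis by linarith
  qed
  have r2: "\<nu>1 / (E * \<nu>1 * (1 - ln \<nu>1)) < \<nu>2 / (E * \<nu>2 * (1 - ln \<nu>2))"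
  proof -
    have l: "ln \<nu>1 < ln \<nu>2" "ln \<nu>2 \<le> 0" using nu by auto
    hence l2: "E * (1 - ln \<nu>2) < E * (1 - ln \<nu>1)" "0 < E * (1 - ln \<nu>2)" "0 < 1 - ln \<nu>1" "0 < 1 - ln \<nu>2" using Eh by auto
    have eq1: "\<nu>1 / (E * \<nu>1 * (1 - ln \<nu>1)) = inverse (E * (1 - ln \<nu>1))" using nu Eh l2 by (simp add: field_simps)
    have eq2: "\<nu>2 / (E * \<nu>2 * (1 - ln \<nu>2)) = inverse (E * (1 - ln \<nu>2))" using nu Eh l2 by (simp add: field_simps)
    have "inverse (E * (1 - ln \<nu>1)) < inverse (E * (1 - ln \<nu>2))" using l2 by (intro less_imp_inverse_less)
    with eq1 eq2 show ?thesis by linarith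
  qed
  have Bp: "0 < E * \<nu> * (1 - ln \<nu>)" if "0 < \<nu>" "\<nu> \<le> 1" for \<nu>
  proof -
    have "ln \<nu> \<le> 0" using that by simp
    hence "0 < 1 - ln \<nu>" by linarith
    thus ?thesis using that Eh by (intro mult_pos_pos) auto
  qed
  have A1: "- (beta (E * \<nu>1) \<nu>1 * ln (beta (E * \<nu>1) \<nu>1)) = \<nu>1 * (1 - E * \<nu>1) * K t1"
    using A[OF n1] unfolding t1_def .
  have A2: "- (beta (E * \<nu>2) \<nu>2 * ln (beta (E * \<nu>2) \<nu>2)) = \<nu>2 * (1 - E * \<nu>2) * K t2"
    using A[OF n2] unfolding t2_def .
  have B1: "- (E * \<nu>1 * ln (E * \<nu>1)) = E * \<nu>1 * (1 - ln \<nu>1)" using Bq[of \<nu>1] n1 unfolding E_def by simp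
  have B2: "- (E * \<nu>2 * ln (E * \<nu>2)) = E * \<nu>2 * (1 - ln \<nu>2)" using Bq[of \<nu>2] n2 unfolding E_def by simp
  have pA1: "0 < \<nu>1 * (1 - E * \<nu>1) * K t1" using n1 f1 Kp by (intro mult_pos_pos) auto
  have pA2: "0 < \<nu>2 * (1 - E * \<nu>2) * K t2" using n2 f1 Kp by (intro mult_pos_pos) auto
  show ?thesis unfolding h_eq E_def[symmetric] A1 A2 B1 B2
    by (rule ratio_mono[OF pA1 Bp[OF n1] pA2 Bp[OF n2] _ _ r1 r2]) (use nu in auto)
qed



lemma E_gt: "9/25 < exp (-1::real)"
proof -
  have "exp (-1) * exp 1 = (1::real)" by (rule Ee)
  moreover have "exp 1 < (2719/1000::real)" using e_bounds by simp
  ultimately have "1 < exp (-1) * (2719/1000::real)" using E_pos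
    by (metis mult_strict_left_mono)
  thus ?thesis by linarith
qed

lemma chi_le:
  fixes \<nu> :: real
  assumes nu: "0 \<le> \<nu>" "\<nu> \<le> 1"
  shows "\<nu> + ln (1 - \<nu> + exp (-1) * \<nu>^2) \<le> 0"
proof -
  define E where "E = exp (-1::real)"
  have Ep: "0 < E" unfolding E_def by simp
  have bpos: "0 < 1 - x + E * x^2" if "0 \<le> x" "x \<le> 1" for x
  proof (cases "x = 1")
    case True thus ?thesis using Ep by simp
  next
    case False
    have "0 \<le> E * x^2" using Ep by simp
    thus ?thesis using that False by linarith
  qed
  define chi where "chi x = x + ln (1 - x + E * x^2)" for x
  have D: "DERIV chi x :> x * (E * x + 2 * E - 1) / (1 - x + E * x^2)" if "0 \<le> x" "x \<le> 1" for x
  proof -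
    have "DERIV chi x :> 1 + (- 1 + E * (2 * x)) / (1 - x + E * x^2)"
      unfolding chi_def using bpos[OF that]
      by (auto intro!: derivative_eq_intros simp: power2_eq_square)
    moreover have "1 + (- 1 + E * (2 * x)) / (1 - x + E * x^2) = x * (E * x + 2 * E - 1) / (1 - x + E * x^2)"
      using bpos[OF that] by (simp add: field_simps power2_eq_square)
    ultimately show ?thesis by simp
  qed
  define x0 where "x0 = exp 1 - (2::real)"
  have x0: "E * x0 + 2 * E - 1 = 0" unfolding x0_def E_def using Ee by (simp add: algebra_simps)
  have chi0: "chi 0 = 0" and chi1: "chi 1 = 0" unfolding chi_def E_def by simp_all
  show ?thesis
  proof (cases "\<nu> \<le> x0")
    case True
    have "chi \<nu> \<le> chi 0"
    proof (rule DERIV_nonpos_imp_nonincreasing[OF nu(1)])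
      fix x assume x: "0 \<le> x" "x \<le> \<nu>"
      have "E * x \<le> E * x0" using x True Ep by (intro mult_left_mono) auto
      hence "E * x + 2 * E - 1 \<le> 0" using x0 by linarith
      hence "x * (E * x + 2 * E - 1) \<le> 0" using x by (simp add: mult_nonneg_nonpos)
      hence "x * (E * x + 2 * E - 1) / (1 - x + E * x^2) \<le> 0"
        using bpos[of x] x nu by (simp add: divide_nonpos_pos)
      thus "\<exists>y. DERIV chi x :> y \<and> y \<le> 0" using D[of x] x nu by auto
    qed
    thus ?thesis using chi0 unfolding chi_def E_def by simp
  next
    case False
    have "chi \<nu> \<le> chi 1"
    proof (rule DERIV_nonneg_imp_nondecreasing[OF nu(2)])
      fix x assume x: "\<nu> \<le> x" "x \<le> 1"
      have "E * x0 \<le> E * x" using x False Ep by (intro mult_left_mono) auto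
      hence "0 \<le> E * x + 2 * E - 1" using x0 by linarith
      hence "0 \<le> x * (E * x + 2 * E - 1)" using x nu by simp
      hence "0 \<le> x * (E * x + 2 * E - 1) / (1 - x + E * x^2)"
        using bpos[of x] x nu by simp
      thus "\<exists>y. DERIV chi x :> y \<and> y \<ge> 0" using D[of x] x nu by auto
    qed
    thus ?thesis using chi1 unfolding chi_def E_def by simp
  qed
qed

lemma psi_ge:
  fixes \<nu> :: real
  assumes nu: "0 < \<nu>" "\<nu> \<le> 1"
  shows "1 - \<nu> + exp (-1) * \<nu>^2 \<le> exp (-1) * (1 - ln \<nu>)"
proof -
  define E where "E = exp (-1::real)"
  have Ep: "9/25 < E" unfolding E_def using E_gt by simp
  define psi where "psi x = E * (1 - ln x) - 1 + x - E * x^2" for x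
  have "psi 1 \<le> psi \<nu>"
  proof (rule DERIV_nonpos_imp_nonincreasing[OF nu(2)])
    fix x assume x: "\<nu> \<le> x" "x \<le> 1"
    hence xp: "0 < x" using nu by simp
    have d: "DERIV psi x :> - E / x + 1 - E * (2 * x)"
      unfolding psi_def using xp
      by (auto intro!: derivative_eq_intros simp: power2_eq_square)
    have sq: "0 \<le> (4 * E * x - 1)^2" by simp
    have "8 * E * (2 * E * x^2 - x + E) = (4 * E * x - 1)^2 + (8 * E^2 - 1)"
      by (simp add: algebra_simps power2_eq_square)
    moreover have "8 * E^2 - 1 > 0"
    proof -
      have "9/25 * (9/25) < E * E" using Ep by (intro mult_strict_mono) auto
      thus ?thesis by (simp add: power2_eq_square)
    qed
    ultimately have "0 < 8 * E * (2 * E * x^2 - x + E)" using sq by linarith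
    hence q: "0 < 2 * E * x^2 - x + E" using Ep by (simp add: zero_less_mult_iff)
    have "- E / x + 1 - E * (2 * x) = - (2 * E * x^2 - x + E) / x"
      using xp by (simp add: field_simps power2_eq_square)
    also have "\<dots> \<le> 0" using q xp by (intro divide_nonpos_pos) auto
    finally show "\<exists>y. DERIV psi x :> y \<and> y \<le> 0" using d by blast
  qed
  moreover have "psi 1 = 0" unfolding psi_def by simp
  ultimately show ?thesis unfolding psi_def E_def by simp
qed

lemma poly_ineq:
  fixes \<nu> :: real
  assumes nu: "0 < \<nu>" "\<nu> \<le> 1"
  shows "inverse (1 - \<nu> + exp (-1) * \<nu>^2) \<le> 1 + (exp 1 - 1) * \<nu>"
proof -
  define E where "E = exp (-1::real)"
  define e where "e = exp (1::real)"
  have Ee': "E * e = 1" unfolding E_def e_def by (rule Ee)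
  have eb: "2718/1000 < e" "e < 2719/1000" unfolding e_def using e_bounds by auto
  have Eb: "9/25 < E" "E < 1/2" unfolding E_def using E_gt E_half by auto
  have id: "(1 - \<nu> + E * \<nu>^2) * (1 + (e - 1) * \<nu>) - 1 - \<nu> * (1 - \<nu>) * ((e - 2) - (1 - E) * \<nu>) = (E * e - 1) * \<nu>^3"
    by (simp add: algebra_simps power2_eq_square power3_eq_cube)
  have "(1 - E) * \<nu> \<le> 1 - E" using nu Eb by (simp add: mult_left_le)
  hence "0 \<le> (e - 2) - (1 - E) * \<nu>" using eb Eb by linarith
  hence "0 \<le> \<nu> * (1 - \<nu>) * ((e - 2) - (1 - E) * \<nu>)" using nu by simp
  hence ge: "1 \<le> (1 - \<nu> + E * \<nu>^2) * (1 + (e - 1) * \<nu>)" using id Ee' by simp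
  have "0 < E * \<nu>^2" using nu Eb by simp
  hence bp: "0 < 1 - \<nu> + E * \<nu>^2" using nu by linarith
  have "inverse (1 - \<nu> + E * \<nu>^2) \<le> inverse (1 - \<nu> + E * \<nu>^2) * ((1 - \<nu> + E * \<nu>^2) * (1 + (e - 1) * \<nu>))"
    using ge bp by (simp add: mult_le_cancel_left1)
  also have "\<dots> = 1 + (e - 1) * \<nu>" using bp by simp
  finally show ?thesis unfolding E_def e_def .
qed



lemma h_q_dec:
  fixes \<nu>1 \<nu>2 :: real
  assumes nu: "0 < \<nu>1" "\<nu>1 < \<nu>2" "\<nu>2 \<le> 1"
  shows "h (exp (-1) * \<nu>2) \<nu>2 < h (exp (-1) * \<nu>1) \<nu>1"
proof -
  define E where "E = exp (-1::real)"
  have n1: "0 < \<nu>1" "\<nu>1 \<le> 1" and n2: "0 < \<nu>2" "\<nu>2 \<le> 1" using nu by auto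
  have Eh: "E < 1/2" "0 < E" using E_half E_pos unfolding E_def by auto
  define b1 where "b1 = beta (E * \<nu>1) \<nu>1"
  define b2 where "b2 = beta (E * \<nu>2) \<nu>2"
  have q1: "E \<le> b1" "b1 < 1" using betaq[OF n1] unfolding b1_def E_def by auto
  have q2: "E \<le> b2" "b2 < 1" using betaq[OF n2] unfolding b2_def E_def by auto
  have bb: "b2 < b1"
  proof -
    have "b1 - b2 = (\<nu>2 - \<nu>1) * (1 - E * (\<nu>1 + \<nu>2))" unfolding b1_def b2_def beta_def
      by (simp add: algebra_simps power2_eq_square)
    moreover have "E * (\<nu>1 + \<nu>2) \<le> E * 2" using Eh nu by (intro mult_left_mono) auto
    hence "E * (\<nu>1 + \<nu>2) < 1" using Eh by linarith
    moreover have "0 < (\<nu>2 - \<nu>1) * (1 - E * (\<nu>1 + \<nu>2))"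
      by (rule mult_pos_pos) (use nu \<open>E * (\<nu>1 + \<nu>2) < 1\<close> in auto)
    ultimately show ?thesis by linarith
  qed
  have A: "b2 * ln b2 < b1 * ln b1" using f_inc[of b2 b1] q2 bb unfolding E_def by simp
  have "E * \<nu>2 \<le> E" using nu Eh mult_left_le[of \<nu>2 E] by simp
  moreover have "E * \<nu>1 < E * \<nu>2" "0 < E * \<nu>1" using nu Eh by auto
  ultimately have B: "E * \<nu>2 * ln (E * \<nu>2) < E * \<nu>1 * ln (E * \<nu>1)"
    using f_dec[of "E * \<nu>1" "E * \<nu>2"] unfolding E_def by simp
  have pA1: "0 < - (b1 * ln b1)" using q1 Eh by (intro negf_pos) auto
  have "E * \<nu>1 < 1" using \<open>E * \<nu>1 < E * \<nu>2\<close> \<open>E * \<nu>2 \<le> E\<close> Eh by linarith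
  hence pB1: "0 < - (E * \<nu>1 * ln (E * \<nu>1))" using \<open>0 < E * \<nu>1\<close> by (intro negf_pos)
  have "min (- (b1 * ln b1)) (- (E * \<nu>1 * ln (E * \<nu>1))) < min (- (b2 * ln b2)) (- (E * \<nu>2 * ln (E * \<nu>2)))"
    using A B by (auto simp: min_def)
  moreover have "0 < min (- (b1 * ln b1)) (- (E * \<nu>1 * ln (E * \<nu>1)))" using pA1 pB1 by simp
  ultimately show ?thesis unfolding h_eq b1_def[symmetric] b2_def[symmetric] E_def[symmetric]
    by (rule less_imp_inverse_less)
qed

lemma pstar_mono:
  fixes \<nu>1 \<nu>2 :: real
  assumes nu: "0 < \<nu>1" "\<nu>1 < \<nu>2" "\<nu>2 \<le> 1"
  shows "p_star \<nu>1 < p_star \<nu>2"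
proof (rule ccontr)
  assume "\<not> ?thesis"
  hence le: "p_star \<nu>2 \<le> p_star \<nu>1" by simp
  have n1: "0 < \<nu>1" "\<nu>1 \<le> 1" and n2: "0 < \<nu>2" "\<nu>2 \<le> 1" using nu by auto
  define P1 where "P1 = p_star \<nu>1"
  define P2 where "P2 = p_star \<nu>2"
  note a = pstar_props[OF n1, folded P1_def] and b = pstar_props[OF n2, folded P2_def]
  have le': "P2 \<le> P1" using le unfolding P1_def P2_def .
  have P1l: "P1 < 1" using a(2) E_lt1 by linarith
  have "\<nu>2 * (1 - P1) \<le> \<nu>2 * (1 - P2)" using le' nu by (intro mult_left_mono) auto
  moreover have "\<nu>1 * (1 - P1) < \<nu>2 * (1 - P1)" using nu P1l by simp
  ultimately have "beta P2 \<nu>2 < beta P1 \<nu>1" unfolding beta_def by (simp add: algebra_simps)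
  hence "beta P2 \<nu>2 * ln (beta P2 \<nu>2) < beta P1 \<nu>1 * ln (beta P1 \<nu>1)" using f_inc b(3) by blast
  moreover have "P1 * ln P1 \<le> P2 * ln P2"
    using f_dec[of P2 P1] b(1) a(2) le' by (cases "P2 = P1") auto
  ultimately show False using a(4) b(4) by linarith
qed

lemma hstar_dec:
  fixes \<nu>1 \<nu>2 :: real
  assumes nu: "0 < \<nu>1" "\<nu>1 < \<nu>2" "\<nu>2 \<le> 1"
  shows "h_star \<nu>2 < h_star \<nu>1"
proof -
  have n1: "0 < \<nu>1" "\<nu>1 \<le> 1" and n2: "0 < \<nu>2" "\<nu>2 \<le> 1" using nu by auto
  define P1 where "P1 = p_star \<nu>1"
  define P2 where "P2 = p_star \<nu>2"
  note a = pstar_props[OF n1, folded P1_def] and b = pstar_props[OF n2, folded P2_def]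
  have lt: "P1 < P2" using pstar_mono[OF nu] unfolding P1_def P2_def .
  have "P2 * ln P2 < P1 * ln P1" using f_dec[OF a(1) lt b(2)] .
  moreover have "P1 < 1" using a(2) E_lt1 by linarith
  hence "0 < - (P1 * ln P1)" using a(1) by (intro negf_pos)
  ultimately have "inverse (- (P2 * ln P2)) < inverse (- (P1 * ln P1))"
    by (intro less_imp_inverse_less) auto
  thus ?thesis using hstar_eq[OF n1] hstar_eq[OF n2] unfolding P1_def P2_def by simp
qed

lemma nuhstar_mono:
  fixes \<nu>1 \<nu>2 :: real
  assumes nu: "0 < \<nu>1" "\<nu>1 < \<nu>2" "\<nu>2 \<le> 1"
  shows "\<nu>1 * h_star \<nu>1 < \<nu>2 * h_star \<nu>2"
proof -
  have n1: "0 < \<nu>1" "\<nu>1 \<le> 1" and n2: "0 < \<nu>2" "\<nu>2 \<le> 1" using nu by auto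
  define P2 where "P2 = p_star \<nu>2"
  note b = pstar_props[OF n2, folded P2_def]
  have P2: "0 < P2" "P2 < 1" using b(1,2) E_lt1 by linarith+
  have "\<nu>1 * h_star \<nu>1 \<le> \<nu>1 * h P2 \<nu>1" using h_min[OF n1 P2] n1 by (intro mult_left_mono) auto
  also have "\<dots> < \<nu>2 * h P2 \<nu>2" using nuh_mono_p[OF P2 nu] .
  also have "\<dots> = \<nu>2 * h_star \<nu>2" unfolding h_star_def P2_def ..
  finally show ?thesis .
qed

lemma second_part:
  fixes \<nu> :: real
  assumes nu: "0 < \<nu>" "\<nu> \<le> 1"
  shows "\<nu> * h_star \<nu> \<le> \<nu> * h (exp (-1) * \<nu>) \<nu>
          \<and> \<nu> * h (exp (-1) * \<nu>) \<nu> \<le> inverse (1 - \<nu> + exp (-1) * \<nu>^2)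
          \<and> inverse (1 - \<nu> + exp (-1) * \<nu>^2) \<le> 1 + (exp 1 - 1) * \<nu>
          \<and> 1 + (exp 1 - 1) * \<nu> \<le> exp 1"
proof (intro conjI)
  define E where "E = exp (-1::real)"
  have Eh: "E < 1/2" "0 < E" using E_half E_pos unfolding E_def by auto
  have "E * \<nu> \<le> E" using nu Eh mult_left_le[of \<nu> E] by simp
  hence q: "0 < E * \<nu>" "E * \<nu> < 1" using nu Eh by (simp, linarith)
  show "\<nu> * h_star \<nu> \<le> \<nu> * h (exp (-1) * \<nu>) \<nu>"
    using h_min[OF nu q[unfolded E_def]] nu by (intro mult_left_mono) auto
  show "inverse (1 - \<nu> + exp (-1) * \<nu>^2) \<le> 1 + (exp 1 - 1) * \<nu>" by (rule poly_ineq[OF nu])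
  show "1 + (exp 1 - 1) * \<nu> \<le> exp 1"
  proof -
    have "0 \<le> (exp 1 - 1) * (1 - \<nu>)" using nu by (intro mult_nonneg_nonneg) auto
    thus ?thesis by (simp add: algebra_simps)
  qed
  define b where "b = beta (E * \<nu>) \<nu>"
  have bq: "b = 1 - \<nu> + E * \<nu>^2" unfolding b_def beta_def by (simp add: power2_eq_square)
  have bb: "E \<le> b" "b < 1" using betaq[OF nu] unfolding b_def E_def by auto
  have bp: "0 < b" using bb Eh by linarith
  have A: "0 < - (b * ln b)" using bb bp by (intro negf_pos) auto
  have B: "0 < - (E * \<nu> * ln (E * \<nu>))" using q by (intro negf_pos) auto
  have r1: "\<nu> / (- (b * ln b)) \<le> inverse b"
  proof -
    have "\<nu> + ln b \<le> 0" using chi_le[of \<nu>] nu bq unfolding E_def by simp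
    hence "\<nu> \<le> - ln b" by linarith
    hence "\<nu> / (- (b * ln b)) \<le> (- ln b) / (- (b * ln b))" using A by (intro divide_right_mono) auto
    moreover have "ln b < 0" using bb bp by simp
    hence "(- ln b) / (- (b * ln b)) = inverse b" using bp by (simp add: field_simps)
    ultimately show ?thesis by simp
  qed
  have r2: "\<nu> / (- (E * \<nu> * ln (E * \<nu>))) \<le> inverse b"
  proof -
    have eq: "- (E * \<nu> * ln (E * \<nu>)) = E * \<nu> * (1 - ln \<nu>)" using Bq[of \<nu>] nu unfolding E_def by simp
    have "b \<le> E * (1 - ln \<nu>)" using psi_ge[OF nu] bq unfolding E_def by simp
    hence "inverse (E * (1 - ln \<nu>)) \<le> inverse b" using bp by (rule le_imp_inverse_le)
    moreover have "\<nu> / (E * \<nu> * (1 - ln \<nu>)) = inverse (E * (1 - ln \<nu>))"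
    proof -
      have "ln \<nu> \<le> 0" using nu by simp
      hence "0 < 1 - ln \<nu>" by linarith
      thus ?thesis using nu Eh by (simp add: field_simps)
    qed
    ultimately show ?thesis unfolding eq by simp
  qed
  show "\<nu> * h (exp (-1) * \<nu>) \<nu> \<le> inverse (1 - \<nu> + exp (-1) * \<nu>^2)"
    unfolding h_eq E_def[symmetric] b_def[symmetric] bq[symmetric]
    using inv_min_max[OF A B] nu r1 r2 by simp
qed


theorem lemma12:
  shows "(\<forall>\<nu>1 \<nu>2. 0 < \<nu>1 \<longrightarrow> \<nu>1 < \<nu>2 \<longrightarrow> \<nu>2 \<le> 1 \<longrightarrow>
            p_star \<nu>1 < p_star \<nu>2
          \<and> \<nu>1 * h_star \<nu>1 < \<nu>2 * h_star \<nu>2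
          \<and> \<nu>1 * h (exp (-1) * \<nu>1) \<nu>1 < \<nu>2 * h (exp (-1) * \<nu>2) \<nu>2
          \<and> h_star \<nu>1 > h_star \<nu>2
          \<and> h (exp (-1) * \<nu>1) \<nu>1 > h (exp (-1) * \<nu>2) \<nu>2)
       \<and> (\<forall>\<nu>. 0 < \<nu> \<longrightarrow> \<nu> \<le> 1 \<longrightarrow>
            \<nu> * h_star \<nu> \<le> \<nu> * h (exp (-1) * \<nu>) \<nu>
          \<and> \<nu> * h (exp (-1) * \<nu>) \<nu> \<le> inverse (1 - \<nu> + exp (-1) * \<nu>^2)
          \<and> inverse (1 - \<nu> + exp (-1) * \<nu>^2) \<le> 1 + (exp 1 - 1) * \<nu>
          \<and> 1 + (exp 1 - 1) * \<nu> \<le> exp 1)"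
proof (intro conjI allI impI)
  fix \<nu>1 \<nu>2 :: real
  assume a: "0 < \<nu>1" "\<nu>1 < \<nu>2" "\<nu>2 \<le> 1"
  show "p_star \<nu>1 < p_star \<nu>2" by (rule pstar_mono[OF a])
  show "\<nu>1 * h_star \<nu>1 < \<nu>2 * h_star \<nu>2" by (rule nuhstar_mono[OF a])
  show "\<nu>1 * h (exp (-1) * \<nu>1) \<nu>1 < \<nu>2 * h (exp (-1) * \<nu>2) \<nu>2" by (rule nuh_mono_q[OF a])
  show "h_star \<nu>1 > h_star \<nu>2" by (rule hstar_dec[OF a])
  show "h (exp (-1) * \<nu>1) \<nu>1 > h (exp (-1) * \<nu>2) \<nu>2" by (rule h_q_dec[OF a])
next
  fix \<nu> :: real
  assume a: "0 < \<nu>" "\<nu> \<le> 1"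
  note s = second_part[OF a]
  show "\<nu> * h_star \<nu> \<le> \<nu> * h (exp (-1) * \<nu>) \<nu>" using s by blast
  show "\<nu> * h (exp (-1) * \<nu>) \<nu> \<le> inverse (1 - \<nu> + exp (-1) * \<nu>^2)" using s by blast
  show "inverse (1 - \<nu> + exp (-1) * \<nu>^2) \<le> 1 + (exp 1 - 1) * \<nu>" using s by blast
  show "1 + (exp 1 - 1) * \<nu> \<le> exp 1" using s by blast
qed

end
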